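(* Let $m\ge2$ and $0<e_0\le1$. For the problem $P_m, e_{i\le m-1,k}\ge e_0\mid\mid C_{\max}$, the LS-ECT schedule (for any list order) satisfies $\frac{C_{\max}(\text{LS-ECT})}{C^*_{\max}}\le 1+\frac{1}{e_0}$, where $C^*_{\max}$ is the optimal makespan.
   Context: Shared-processing parallel machine scheduling: $m$ identical machines $M_1,\dots,M_m$, $n$ primary jobs available at time $0$ with processing times $p_j>0$, each processed without interruption on one machine, jobs on a machine processed one after another. The time axis of machine $M_i$ is partitioned into consecutive intervals $(0,t_{i,1}],(t_{i,1},t_{i,2}],\dots$ with sharing ratios $e_{i,k}\in(0,1]$; during the $k$-th interval $M_i$ processes primary work at rate $e_{i,k}$. In $P_m, e_{i\le m-1,k}\ge e_0\mid\mid C_{\max}$ all sharing ratios on machines $M_1,\dots,M_{m-1}$ are at least $e_0$, the ratios on $M_m$ are arbitrary in $(0,1]$, and the goal is to minimize the makespan. LS-ECT: given an ordered list of jobs, the jobs are scheduled one by one in list order; each job is appended after the jobs already assigned to some machine, choosing the machine on which it would complete earliest. *)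

theory Defs
  imports Complex_Main
begin

text \<open>Machines are indexed 0,...,m-1 (machine i corresponds to M_(i+1)); jobs are
indexed 0,...,n-1. The time axis of machine i is partitioned by the breakpoints
  0 = t i 0 < t i 1 < t i 2 < ...  (unbounded),
and during the k-th interval (t i k, t i (Suc k)] machine i processes primary
work at rate er i k.\<close>

definition valid_profile :: "(nat \<Rightarrow> nat \<Rightarrow> real) \<Rightarrow> (nat \<Rightarrow> nat \<Rightarrow> real) \<Rightarrow> nat \<Rightarrow> bool" where
  "valid_profile t er m \<longleftrightarrow>
     (\<forall>i<m. t i 0 = 0 \<and> strict_mono (t i) \<and> (\<forall>x. \<exists>k. x < t i k)
            \<and> (\<forall>k. 0 < er i k \<and> er i k \<le> 1))"

definition cum_work :: "(nat \<Rightarrow> nat \<Rightarrow> real) \<Rightarrow> (nat \<Rightarrow> nat \<Rightarrow> real) \<Rightarrow> nat \<Rightarrow> real \<Rightarrow> real" where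
  "cum_work t er i x = (\<Sum>k\<in>{k. t i k < x}. er i k * (min x (t i (Suc k)) - t i k))"

definition completes :: "(nat \<Rightarrow> nat \<Rightarrow> real) \<Rightarrow> (nat \<Rightarrow> nat \<Rightarrow> real) \<Rightarrow> nat \<Rightarrow> real \<Rightarrow> real \<Rightarrow> real \<Rightarrow> bool" where
  "completes t er i a p b \<longleftrightarrow> a \<le> b \<and> cum_work t er i b - cum_work t er i a = p"

definition feasible_schedule ::
  "(nat \<Rightarrow> nat \<Rightarrow> real) \<Rightarrow> (nat \<Rightarrow> nat \<Rightarrow> real) \<Rightarrow> nat \<Rightarrow> nat \<Rightarrow> (nat \<Rightarrow> real)
   \<Rightarrow> (nat \<Rightarrow> nat) \<Rightarrow> (nat \<Rightarrow> real) \<Rightarrow> (nat \<Rightarrow> real) \<Rightarrow> bool" where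
  "feasible_schedule t er m n p asg S C \<longleftrightarrow>
     (\<forall>j<n. asg j < m \<and> 0 \<le> S j \<and> completes t er (asg j) (S j) (p j) (C j))
     \<and> (\<forall>j<n. \<forall>j'<n. j \<noteq> j' \<and> asg j = asg j' \<longrightarrow> C j \<le> S j' \<or> C j' \<le> S j)"

definition makespan :: "nat \<Rightarrow> (nat \<Rightarrow> real) \<Rightarrow> real" where
  "makespan n C = Max (insert 0 (C ` {..<n}))"

definition opt_makespan ::
  "(nat \<Rightarrow> nat \<Rightarrow> real) \<Rightarrow> (nat \<Rightarrow> nat \<Rightarrow> real) \<Rightarrow> nat \<Rightarrow> nat \<Rightarrow> (nat \<Rightarrow> real) \<Rightarrow> real" where
  "opt_makespan t er m n p =
     Inf {makespan n C | asg S C. feasible_schedule t er m n p asg S C}"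

definition ls_load :: "nat list \<Rightarrow> (nat \<Rightarrow> nat) \<Rightarrow> (nat \<Rightarrow> real) \<Rightarrow> nat \<Rightarrow> nat \<Rightarrow> real" where
  "ls_load ord asg C q i = Max (insert 0 {C (ord ! r) | r. r < q \<and> asg (ord ! r) = i})"

text \<open>(asg, C) is a schedule produced by LS-ECT for the list ord (with some
tie-breaking): the q-th job of the list is appended on a machine where it
completes earliest among all machines, given the previously scheduled jobs.\<close>
definition ls_ect_schedule ::
  "(nat \<Rightarrow> nat \<Rightarrow> real) \<Rightarrow> (nat \<Rightarrow> nat \<Rightarrow> real) \<Rightarrow> nat \<Rightarrow> nat \<Rightarrow> (nat \<Rightarrow> real)
   \<Rightarrow> nat list \<Rightarrow> (nat \<Rightarrow> nat) \<Rightarrow> (nat \<Rightarrow> real) \<Rightarrow> bool" where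
  "ls_ect_schedule t er m n p ord asg C \<longleftrightarrow>
     (\<forall>q<n. let j = ord ! q in
        asg j < m
        \<and> completes t er (asg j) (ls_load ord asg C q (asg j)) (p j) (C j)
        \<and> (\<forall>i<m. \<forall>c. completes t er i (ls_load ord asg C q i) (p j) c \<longrightarrow> C j \<le> c))"

end

theory Submission
  imports Defs
begin

definition gN :: "(nat \<Rightarrow> nat \<Rightarrow> real) \<Rightarrow> (nat \<Rightarrow> nat \<Rightarrow> real) \<Rightarrow> nat \<Rightarrow> nat \<Rightarrow> real \<Rightarrow> real" where
  "gN t er i N x = (\<Sum>k<N. er i k * (min (max x (t i k)) (t i (Suc k)) - t i k))"

lemma cum_eq:
  fixes t er :: "nat \<Rightarrow> nat \<Rightarrow> real"
  assumes sm: "strict_mono (t i)" and x: "x \<le> t i N"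
  shows "cum_work t er i x = gN t er i N x"
  unfolding cum_work_def gN_def
proof (rule sum.mono_neutral_cong_left)
  show "finite {..<N}" by simp
  show "{k. t i k < x} \<subseteq> {..<N}"
  proof
    fix k assume "k \<in> {k. t i k < x}"
    hence "t i k < t i N" using x by simp
    thus "k \<in> {..<N}" using sm by (simp add: strict_mono_less)
  qed
  show "\<forall>k\<in>{..<N} - {k. t i k < x}. er i k * (min (max x (t i k)) (t i (Suc k)) - t i k) = 0"
  proof
    fix k assume "k \<in> {..<N} - {k. t i k < x}"
    hence "x \<le> t i k" by simp
    moreover have "t i k \<le> t i (Suc k)" using sm by (simp add: strict_mono_less_eq)
    ultimately show "er i k * (min (max x (t i k)) (t i (Suc k)) - t i k) = 0" by simp
  qed
  fix k assume "k \<in> {k. t i k < x}"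
  thus "er i k * (min x (t i (Suc k)) - t i k) = er i k * (min (max x (t i k)) (t i (Suc k)) - t i k)"
    by simp
qed

lemma tele:
  fixes t er :: "nat \<Rightarrow> nat \<Rightarrow> real"
  assumes t0: "t i 0 = 0" and sm: "strict_mono (t i)"
  shows "(\<Sum>k<N. min (max x (t i k)) (t i (Suc k)) - t i k) = min (max x 0) (t i N)"
proof (induction N)
  case 0 then show ?case using t0 by (simp add: min_def max_def)
next
  case (Suc N)
  have a: "0 \<le> t i N" using sm t0 by (metis le0 strict_mono_less_eq)
  have b: "t i N \<le> t i (Suc N)" using sm by (simp add: strict_mono_less_eq)
  have "(\<Sum>k<Suc N. min (max x (t i k)) (t i (Suc k)) - t i k)
     = min (max x 0) (t i N) + (min (max x (t i N)) (t i (Suc N)) - t i N)"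
    using Suc.IH by simp
  also have "\<dots> = min (max x 0) (t i (Suc N))"
    using a b by (cases "x \<le> t i N"; cases "x \<le> 0"; cases "x \<le> t i (Suc N)") (simp_all add: min_def max_def)
  finally show ?case .
qed

lemma gN_diff:
  fixes t er :: "nat \<Rightarrow> nat \<Rightarrow> real"
  assumes t0: "t i 0 = 0" and sm: "strict_mono (t i)" and ab: "0 \<le> a" "a \<le> b" "b \<le> t i N"
  shows "gN t er i N b - gN t er i N a = (\<Sum>k<N. er i k * (min (max b (t i k)) (t i (Suc k)) - min (max a (t i k)) (t i (Suc k))))"
    and "(\<Sum>k<N. (min (max b (t i k)) (t i (Suc k)) - min (max a (t i k)) (t i (Suc k)))) = b - a"
    and "\<And>k. 0 \<le> min (max b (t i k)) (t i (Suc k)) - min (max a (t i k)) (t i (Suc k))"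
proof -
  show "gN t er i N b - gN t er i N a = (\<Sum>k<N. er i k * (min (max b (t i k)) (t i (Suc k)) - min (max a (t i k)) (t i (Suc k))))"
    unfolding gN_def by (simp add: sum_subtractf[symmetric] algebra_simps)
  have "(\<Sum>k<N. (min (max b (t i k)) (t i (Suc k)) - min (max a (t i k)) (t i (Suc k))))
    = (\<Sum>k<N. min (max b (t i k)) (t i (Suc k)) - t i k) - (\<Sum>k<N. min (max a (t i k)) (t i (Suc k)) - t i k)"
    by (simp add: sum_subtractf[symmetric])
  also have "\<dots> = b - a" using tele[where t=t and i=i, OF t0 sm] ab by simp
  finally show "(\<Sum>k<N. (min (max b (t i k)) (t i (Suc k)) - min (max a (t i k)) (t i (Suc k)))) = b - a" .
  fix k show "0 \<le> min (max b (t i k)) (t i (Suc k)) - min (max a (t i k)) (t i (Suc k))"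
    using ab by (simp add: min_def max_def)
qed

lemma cum_bounds:
  fixes t er :: "nat \<Rightarrow> nat \<Rightarrow> real"
  assumes t0: "t i 0 = 0" and sm: "strict_mono (t i)" and unb: "\<forall>x. \<exists>k. x < t i k"
    and er: "\<forall>k. 0 < er i k \<and> er i k \<le> 1"
    and ab: "0 \<le> a" "a \<le> b"
  shows "cum_work t er i b - cum_work t er i a \<le> b - a"
    and "\<And>e. (\<forall>k. e \<le> er i k) \<Longrightarrow> e * (b - a) \<le> cum_work t er i b - cum_work t er i a"
    and "0 \<le> cum_work t er i b - cum_work t er i a"
    and "a < b \<Longrightarrow> cum_work t er i a < cum_work t er i b"
proof -
  obtain N where N: "b < t i N" using unb by blast
  define d where "d k = min (max b (t i k)) (t i (Suc k)) - min (max a (t i k)) (t i (Suc k))" for k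
  have ca: "cum_work t er i a = gN t er i N a" using cum_eq[where t=t and i=i and er=er and N=N, OF sm] N ab by simp
  have cb: "cum_work t er i b = gN t er i N b" using cum_eq[where t=t and i=i and er=er and N=N, OF sm] N ab by simp
  note G1 = gN_diff(1)[where t=t and i=i and N=N and er=er, OF t0 sm ab(1) ab(2), folded d_def]
  note G2 = gN_diff(2)[where t=t and i=i and N=N, OF t0 sm ab(1) ab(2), folded d_def]
  note G3 = gN_diff(3)[where t=t and i=i and N=N, OF t0 sm ab(1) ab(2), folded d_def]
  have D: "cum_work t er i b - cum_work t er i a = (\<Sum>k<N. er i k * d k)" using G1 ca cb N by simp
  have S: "(\<Sum>k<N. d k) = b - a" using G2 N by simp
  have dpos: "\<And>k. 0 \<le> d k" using G3 N by simp
  have "(\<Sum>k<N. er i k * d k) \<le> (\<Sum>k<N. d k)"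
    by (rule sum_mono) (use er dpos in \<open>simp add: mult_left_le_one_le less_imp_le\<close>)
  thus "cum_work t er i b - cum_work t er i a \<le> b - a" using D S by simp
  show "0 \<le> cum_work t er i b - cum_work t er i a" unfolding D
    by (rule sum_nonneg) (use er dpos in \<open>simp add: less_imp_le\<close>)
  fix e assume e: "\<forall>k. e \<le> er i k"
  have "e * (b - a) = (\<Sum>k<N. e * d k)" using S by (simp add: sum_distrib_left[symmetric])
  also have "\<dots> \<le> (\<Sum>k<N. er i k * d k)"
    by (rule sum_mono) (use e dpos in \<open>simp add: mult_right_mono\<close>)
  finally show "e * (b - a) \<le> cum_work t er i b - cum_work t er i a" using D by simp
next
  assume lt: "a < b"
  obtain N where N: "b < t i N" using unb by blast
  define d where "d k = min (max b (t i k)) (t i (Suc k)) - min (max a (t i k)) (t i (Suc k))" for k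
  have ca: "cum_work t er i a = gN t er i N a" using cum_eq[where t=t and i=i and er=er and N=N, OF sm] N ab by simp
  have cb: "cum_work t er i b = gN t er i N b" using cum_eq[where t=t and i=i and er=er and N=N, OF sm] N ab by simp
  note G1 = gN_diff(1)[where t=t and i=i and N=N and er=er, OF t0 sm ab(1) ab(2), folded d_def]
  note G2 = gN_diff(2)[where t=t and i=i and N=N, OF t0 sm ab(1) ab(2), folded d_def]
  note G3 = gN_diff(3)[where t=t and i=i and N=N, OF t0 sm ab(1) ab(2), folded d_def]
  have D: "cum_work t er i b - cum_work t er i a = (\<Sum>k<N. er i k * d k)" using G1 ca cb N by simp
  have S: "(\<Sum>k<N. d k) = b - a" using G2 N by simp
  have dpos: "\<And>k. 0 \<le> d k" using G3 N by simp
  obtain k where k: "k < N" "0 < d k"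
  proof (rule ccontr)
    assume "\<not> thesis"
    with that have "\<forall>k<N. d k \<le> 0" by force
    hence "(\<Sum>k<N. d k) \<le> 0" by (intro sum_nonpos) simp
    thus False using S lt by simp
  qed
  have "0 < (\<Sum>k<N. er i k * d k)"
    by (rule sum_pos2[of _ k]) (use k er dpos in \<open>auto simp: less_imp_le\<close>)
  thus "cum_work t er i a < cum_work t er i b" using D by simp
qed

lemma cum0:
  fixes t er :: "nat \<Rightarrow> nat \<Rightarrow> real"
  assumes t0: "t i 0 = 0" and sm: "strict_mono (t i)"
  shows "cum_work t er i 0 = 0"
  using cum_eq[where t=t and i=i and x=0 and N=0 and er=er, OF sm] t0 by (simp add: gN_def)

lemma gN_cont: "isCont (gN t er i N) x"
  unfolding gN_def by (intro continuous_intros)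

lemma exists_completion:
  fixes t er :: "nat \<Rightarrow> nat \<Rightarrow> real"
  assumes t0: "t i 0 = 0" and sm: "strict_mono (t i)" and unb: "\<forall>x. \<exists>k. x < t i k"
    and ab: "0 \<le> a" "a \<le> b" and p: "0 \<le> pp" and w: "cum_work t er i a + pp \<le> cum_work t er i b"
  shows "\<exists>c. completes t er i a pp c \<and> c \<le> b"
proof -
  obtain N where N: "b < t i N" using unb by blast
  have ca: "cum_work t er i a = gN t er i N a" using cum_eq[where t=t and i=i and er=er and N=N, OF sm] N ab by simp
  have cb: "cum_work t er i b = gN t er i N b" using cum_eq[where t=t and i=i and er=er and N=N, OF sm] N ab by simp
  obtain c where c: "a \<le> c" "c \<le> b" "gN t er i N c = cum_work t er i a + pp"
    using IVT[of "gN t er i N" a "cum_work t er i a + pp" b] ca cb w p ab gN_cont by auto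
  have "cum_work t er i c = gN t er i N c" using cum_eq[where t=t and i=i and er=er and N=N, OF sm] N c by simp
  thus ?thesis using c unfolding completes_def by (intro exI[of _ c]) simp
qed


lemma opt_machine:
  fixes t er :: "nat \<Rightarrow> nat \<Rightarrow> real"
  assumes t0: "t i 0 = 0" and sm: "strict_mono (t i)" and unb: "\<forall>x. \<exists>k. x < t i k"
    and er: "\<forall>k. 0 < er i k \<and> er i k \<le> 1"
    and fs: "feasible_schedule t er m n p asg S C" and pp: "\<forall>j<n. 0 < p j"
  shows "finite J \<Longrightarrow> J \<subseteq> {j. j<n \<and> asg j = i} \<Longrightarrow> 0 \<le> T \<Longrightarrow> (\<forall>j\<in>J. C j \<le> T)
     \<Longrightarrow> sum p J \<le> cum_work t er i T"
proof (induction "card J" arbitrary: J T rule: less_induct)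
  case less
  note CB = cum_bounds[where t=t and i=i and er=er, OF t0 sm unb er]
  have c0: "cum_work t er i 0 = 0" using cum0[where t=t and i=i and er=er, OF t0 sm] .
  have fsj: "\<And>j. j < n \<Longrightarrow> 0 \<le> S j \<and> S j \<le> C j \<and> cum_work t er (asg j) (C j) - cum_work t er (asg j) (S j) = p j"
    using fs unfolding feasible_schedule_def completes_def by auto
  show ?case
  proof (cases "J = {}")
    case True
    then show ?thesis using CB(3)[of 0 T] less.prems c0 by simp
  next
    case False
    obtain j where j: "j \<in> J" "\<forall>j'\<in>J. C j' \<le> C j"
      using Max_in[of "C ` J"] less.prems(1) False
      by (metis (no_types, lifting) Max_ge finite_imageI imageE image_eqI image_is_empty)
    have jn: "j < n" "asg j = i" using j less.prems(2) by auto
    have others: "\<forall>j'\<in>J - {j}. C j' \<le> S j"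
    proof
      fix j' assume j': "j' \<in> J - {j}"
      have j'n: "j' < n" "asg j' = i" using j' less.prems(2) by auto
      have "C j \<le> S j' \<or> C j' \<le> S j" using fs j' jn j'n unfolding feasible_schedule_def by auto
      moreover have "\<not> C j \<le> S j'"
      proof
        assume h: "C j \<le> S j'"
        have "S j' = C j'" using h fsj[OF j'n(1)] j(2) j' by force
        hence "p j' = 0" using fsj[OF j'n(1)] by simp
        thus False using pp j'n by force
      qed
      ultimately show "C j' \<le> S j" by blast
    qed
    have cj: "card (J - {j}) < card J" using j(1) less.prems(1) by (meson card_Diff1_less)
    have IH: "sum p (J - {j}) \<le> cum_work t er i (S j)"
      apply (rule less.hyps[OF cj])
      using less.prems j others fsj[OF jn(1)] by auto
    have "sum p J = sum p (J - {j}) + p j" using j less.prems(1) by (simp add: sum.remove)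
    also have "\<dots> \<le> cum_work t er i (C j)" using IH fsj[OF jn(1)] jn by simp
    also have "\<dots> \<le> cum_work t er i T"
      using CB(3)[of "C j" T] fsj[OF jn(1)] j less.prems by auto
    finally show ?thesis .
  qed
qed


lemma makespan_ge: "j < n \<Longrightarrow> C j \<le> makespan n C"
  unfolding makespan_def by (intro Max_ge) auto

lemma makespan_nonneg: "0 \<le> makespan n C"
  unfolding makespan_def by (intro Max_ge) auto

lemma makespan_le: "0 \<le> B \<Longrightarrow> (\<forall>j<n. C j \<le> B) \<Longrightarrow> makespan n C \<le> B"
  unfolding makespan_def by (subst Max_le_iff) auto

lemma opt_total:
  fixes t er :: "nat \<Rightarrow> nat \<Rightarrow> real"
  assumes vp: "valid_profile t er m"
    and fs: "feasible_schedule t er m n p asg S C" and pp: "\<forall>j<n. 0 < p j"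
  shows "(\<Sum>j<n. p j) \<le> (\<Sum>i<m. cum_work t er i (makespan n C))"
proof -
  have "(\<Sum>j<n. p j) = (\<Sum>i<m. sum p {j \<in> {..<n}. asg j = i})"
    using fs unfolding feasible_schedule_def by (intro sum.group[symmetric]) auto
  also have "\<dots> \<le> (\<Sum>i<m. cum_work t er i (makespan n C))"
  proof (rule sum_mono)
    fix i assume i: "i \<in> {..<m}"
    have pr: "t i 0 = 0" "strict_mono (t i)" "\<forall>x. \<exists>k. x < t i k" "\<forall>k. 0 < er i k \<and> er i k \<le> 1"
      using vp i unfolding valid_profile_def by auto
    show "sum p {j \<in> {..<n}. asg j = i} \<le> cum_work t er i (makespan n C)"
      by (rule opt_machine[OF pr fs pp]) (auto simp: makespan_ge makespan_nonneg)
  qed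
  finally show ?thesis .
qed

lemma opt_job:
  fixes t er :: "nat \<Rightarrow> nat \<Rightarrow> real"
  assumes vp: "valid_profile t er m"
    and fs: "feasible_schedule t er m n p asg S C" and j: "j < n"
  shows "p j \<le> makespan n C"
proof -
  have h: "asg j < m" "0 \<le> S j" "S j \<le> C j" "cum_work t er (asg j) (C j) - cum_work t er (asg j) (S j) = p j"
    using fs j unfolding feasible_schedule_def completes_def by auto
  have pr: "t (asg j) 0 = 0" "strict_mono (t (asg j))" "\<forall>x. \<exists>k. x < t (asg j) k" "\<forall>k. 0 < er (asg j) k \<and> er (asg j) k \<le> 1"
    using vp h(1) unfolding valid_profile_def by auto
  have "p j \<le> C j - S j" using cum_bounds(1)[where t=t and i="asg j" and er=er, OF pr h(2) h(3)] h(4) by simp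
  also have "\<dots> \<le> makespan n C" using makespan_ge[OF j, of C] h by simp
  finally show ?thesis .
qed

lemma ls_load_nonneg: "0 \<le> ls_load ord asg C q i"
  unfolding ls_load_def by (intro Max_ge) (auto intro: finite_image_set)

lemma ls_load_Suc:
  "ls_load ord asg C (Suc q) i = (if asg (ord ! q) = i then max (C (ord ! q)) (ls_load ord asg C q i) else ls_load ord asg C q i)"
proof -
  define A where "A = {C (ord ! r) | r. r < q \<and> asg (ord ! r) = i}"
  have fA: "finite A" unfolding A_def by (intro finite_image_set) simp
  have "{C (ord ! r) | r. r < Suc q \<and> asg (ord ! r) = i} = (if asg (ord ! q) = i then insert (C (ord ! q)) A else A)"
    unfolding A_def by (auto simp: less_Suc_eq)
  moreover have "Max (insert 0 (insert (C (ord ! q)) A)) = max (C (ord ! q)) (Max (insert 0 A))"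
    using fA by (metis Max_insert finite_insert insert_commute insert_not_empty)
  ultimately show ?thesis unfolding ls_load_def A_def[symmetric] by simp
qed

lemma ls_ge: "r < q \<Longrightarrow> asg (ord ! r) = i \<Longrightarrow> C (ord ! r) \<le> ls_load ord asg C q i"
  unfolding ls_load_def by (intro Max_ge) (auto intro: finite_image_set)


lemma ls_work:
  fixes t er :: "nat \<Rightarrow> nat \<Rightarrow> real"
  assumes vp: "valid_profile t er m" and ls: "ls_ect_schedule t er m n p ord asg C" and i: "i < m"
  shows "q \<le> n \<Longrightarrow> cum_work t er i (ls_load ord asg C q i) = (\<Sum>r\<in>{r \<in> {..<q}. asg (ord ! r) = i}. p (ord ! r))"
proof (induction q)
  have pr: "t i 0 = 0" "strict_mono (t i)" "\<forall>x. \<exists>k. x < t i k" "\<forall>k. 0 < er i k \<and> er i k \<le> 1"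
    using vp i unfolding valid_profile_def by auto
  case 0
  have "ls_load ord asg C 0 i = 0" unfolding ls_load_def by simp
  then show ?case using cum0[where t=t and i=i and er=er, OF pr(1,2)] by simp
next
  case (Suc q)
  hence q: "q < n" by simp
  define j where "j = ord ! q"
  have h: "completes t er (asg j) (ls_load ord asg C q (asg j)) (p j) (C j)"
    using ls q unfolding ls_ect_schedule_def j_def Let_def by auto
  show ?case
  proof (cases "asg j = i")
    case True
    have le: "ls_load ord asg C q i \<le> C j" and cw: "cum_work t er i (C j) - cum_work t er i (ls_load ord asg C q i) = p j"
      using h True unfolding completes_def by auto
    have st: "{r \<in> {..<Suc q}. asg (ord ! r) = i} = insert q {r \<in> {..<q}. asg (ord ! r) = i}"
      using True unfolding j_def by auto
    have "cum_work t er i (ls_load ord asg C (Suc q) i) = cum_work t er i (C j)"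
      using ls_load_Suc[of ord asg C q i] True le unfolding j_def by simp
    also have "\<dots> = (\<Sum>r\<in>{r \<in> {..<q}. asg (ord ! r) = i}. p (ord ! r)) + p j"
      using cw Suc q by simp
    also have "\<dots> = (\<Sum>r\<in>{r \<in> {..<Suc q}. asg (ord ! r) = i}. p (ord ! r))"
      unfolding st j_def by (simp add: add.commute)
    finally show ?thesis .
  next
    case False
    have st: "{r \<in> {..<Suc q}. asg (ord ! r) = i} = {r \<in> {..<q}. asg (ord ! r) = i}"
      using False unfolding j_def by (auto simp: less_Suc_eq)
    show ?thesis using ls_load_Suc[of ord asg C q i] False Suc q unfolding st j_def by simp
  qed
qed


lemma job_bound:
  fixes m n :: nat and e0 :: real and t er :: "nat \<Rightarrow> nat \<Rightarrow> real"
    and p :: "nat \<Rightarrow> real" and ord :: "nat list"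
    and asg :: "nat \<Rightarrow> nat" and C :: "nat \<Rightarrow> real"
  assumes "m \<ge> 2" and e0: "0 < e0"
    and vp: "valid_profile t er m"
    and ee: "\<forall>i<m - 1. \<forall>k. e0 \<le> er i k"
    and pp: "\<forall>j<n. 0 < p j"
    and dist: "distinct ord" and so: "set ord = {..<n}"
    and ls: "ls_ect_schedule t er m n p ord asg C"
    and fs: "feasible_schedule t er m n p asg' S' C'"
    and q: "q < n"
  shows "C (ord ! q) \<le> (1 + 1 / e0) * makespan n C'"
proof -
  define M where "M = makespan n C'"
  define j where "j = ord ! q"
  have len: "length ord = n" using dist so by (metis card_lessThan distinct_card)
  have jn: "j < n" using q len so unfolding j_def by (metis lessThan_iff nth_mem)
  have M0: "0 \<le> M" unfolding M_def by (rule makespan_nonneg)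
  have pjM: "p j \<le> M" unfolding M_def by (rule opt_job[OF vp fs jn])
  have pj0: "0 < p j" using pp jn by simp
  define L where "L i = ls_load ord asg C q i" for i
  have L0: "\<And>i. 0 \<le> L i" unfolding L_def by (rule ls_load_nonneg)
  have ect: "\<And>i c. i < m \<Longrightarrow> completes t er i (L i) (p j) c \<Longrightarrow> C j \<le> c"
    using ls q unfolding ls_ect_schedule_def L_def j_def Let_def by auto
  have pr: "\<And>i. i < m \<Longrightarrow> t i 0 = 0 \<and> strict_mono (t i) \<and> (\<forall>x. \<exists>k. x < t i k) \<and> (\<forall>k. 0 < er i k \<and> er i k \<le> 1)"
    using vp unfolding valid_profile_def by auto
  have MM: "M \<le> (1 + 1 / e0) * M" using M0 e0 by (simp add: algebra_simps)
  show ?thesis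
  proof (cases "\<exists>i<m - 1. L i \<le> M")
    case True
    then obtain i where i: "i < m - 1" "L i \<le> M" by blast
    have im: "i < m" using i by simp
    note pri = pr[OF im]
    have ge: "e0 * (L i + p j / e0 - L i) \<le> cum_work t er i (L i + p j / e0) - cum_work t er i (L i)"
      apply (rule cum_bounds(2))
      using pri L0[of i] ee i e0 pj0 by (auto simp: less_imp_le)
    have "e0 * (L i + p j / e0 - L i) = p j" using e0 by simp
    hence w: "cum_work t er i (L i) + p j \<le> cum_work t er i (L i + p j / e0)" using ge by simp
    obtain c where c: "completes t er i (L i) (p j) c" "c \<le> L i + p j / e0"
      using exists_completion[where t=t and i=i and er=er, OF _ _ _ L0[of i] _ _ w] pri e0 pj0
      by (auto simp: less_imp_le)
    have "C j \<le> L i + p j / e0" using ect[OF im c(1)] c(2) by simp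
    also have "\<dots> \<le> M + M / e0" using i(2) pjM e0 by (simp add: add_mono divide_right_mono)
    also have "\<dots> = (1 + 1 / e0) * M" by (simp add: algebra_simps)
    finally show ?thesis unfolding j_def M_def .
  next
    case False
    hence big: "\<forall>i<m - 1. M < L i" by auto
    have asgm: "\<And>r. r < n \<Longrightarrow> asg (ord ! r) < m"
      using ls unfolding ls_ect_schedule_def Let_def by auto
    have "(\<Sum>i<m. cum_work t er i (L i)) = (\<Sum>i<m. \<Sum>r\<in>{r \<in> {..<q}. asg (ord ! r) = i}. p (ord ! r))"
      using ls_work[OF vp ls] q unfolding L_def by (intro sum.cong) auto
    also have "\<dots> = (\<Sum>r<q. p (ord ! r))"
      using asgm q by (intro sum.group) auto
    finally have sL: "(\<Sum>i<m. cum_work t er i (L i)) = (\<Sum>r<q. p (ord ! r))" .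
    have "(\<Sum>r<q. p (ord ! r)) + p j = (\<Sum>r<Suc q. p (ord ! r))" unfolding j_def by simp
    also have "\<dots> \<le> (\<Sum>r<n. p (ord ! r))"
    proof (rule sum_mono2)
      show "finite {..<n}" by simp
      show "{..<Suc q} \<subseteq> {..<n}" using q by auto
      fix r assume "r \<in> {..<n} - {..<Suc q}"
      hence "ord ! r \<in> {..<n}" using len so by (metis DiffD1 lessThan_iff nth_mem)
      thus "0 \<le> p (ord ! r)" using pp by (simp add: less_imp_le)
    qed
    also have "\<dots> = (\<Sum>j<n. p j)"
    proof -
      have inj: "inj_on ((!) ord) {..<n}" using dist len by (simp add: inj_on_nth)
      have im: "(!) ord ` {..<n} = {..<n}" using len so by (metis atLeast_upt set_map map_nth)
      show ?thesis using sum.reindex[OF inj, of p] im by simp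
    qed
    also have "\<dots> \<le> (\<Sum>i<m. cum_work t er i M)" unfolding M_def by (rule opt_total[OF vp fs pp])
    finally have tot: "(\<Sum>i<m. cum_work t er i (L i)) + p j \<le> (\<Sum>i<m. cum_work t er i M)" using sL by simp
    have msuc: "m = Suc (m - 1)" using assms(1) by simp
    have sp: "\<And>f. (\<Sum>i<m. f i) = (\<Sum>i<m - 1. f i) + f (m - 1)"
      by (subst msuc) simp
    have "(\<Sum>i<m - 1. cum_work t er i M) \<le> (\<Sum>i<m - 1. cum_work t er i (L i))"
    proof (rule sum_mono)
      fix i assume i: "i \<in> {..<m - 1}"
      hence im: "i < m" by simp
      note pri = pr[OF im]
      show "cum_work t er i M \<le> cum_work t er i (L i)"
        using cum_bounds(3)[where t=t and i=i and er=er and a=M and b="L i"] pri M0 big i by auto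
    qed
    hence w: "cum_work t er (m - 1) (L (m - 1)) + p j \<le> cum_work t er (m - 1) M"
      using tot sp[of "\<lambda>i. cum_work t er i (L i)"] sp[of "\<lambda>i. cum_work t er i M"] by linarith
    have lm: "m - 1 < m" using assms(1) by simp
    note prl = pr[OF lm]
    have LM: "L (m - 1) \<le> M"
    proof (rule ccontr)
      assume "\<not> L (m - 1) \<le> M"
      hence "cum_work t er (m - 1) M \<le> cum_work t er (m - 1) (L (m - 1))"
        using cum_bounds(3)[where t=t and i="m - 1" and er=er and a=M and b="L (m - 1)"] prl M0 by auto
      thus False using w pj0 by simp
    qed
    obtain c where c: "completes t er (m - 1) (L (m - 1)) (p j) c" "c \<le> M"
      using exists_completion[where t=t and i="m - 1" and er=er, OF _ _ _ L0[of "m - 1"] LM _ w] prl pj0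
      by (auto simp: less_imp_le)
    have "C j \<le> M" using ect[OF lm c(1)] c(2) by simp
    thus ?thesis using MM unfolding j_def M_def by simp
  qed
qed


theorem theorem4:
  fixes m n :: nat and e0 :: real and t er :: "nat \<Rightarrow> nat \<Rightarrow> real"
    and p :: "nat \<Rightarrow> real" and ord :: "nat list"
    and asg :: "nat \<Rightarrow> nat" and C :: "nat \<Rightarrow> real"
  assumes "m \<ge> 2" and "0 < e0" and "e0 \<le> 1"
    and "valid_profile t er m"
    and "\<forall>i<m - 1. \<forall>k. e0 \<le> er i k"
    and "\<forall>j<n. 0 < p j"
    and "distinct ord" and "set ord = {..<n}"
    and "ls_ect_schedule t er m n p ord asg C"
  shows "makespan n C \<le> (1 + 1 / e0) * opt_makespan t er m n p"
proof -
  define Ms where "Ms = {makespan n C' | asg' S' C'. feasible_schedule t er m n p asg' S' C'}"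
  define K where "K = 1 + 1 / e0"
  have K: "0 < K" unfolding K_def using assms(2) by (simp add: add_pos_pos)
  have len: "length ord = n" using assms(7,8) by (metis card_lessThan distinct_card)
  have ex: "\<And>j. j < n \<Longrightarrow> \<exists>r<n. ord ! r = j" using assms(8) len by (metis in_set_conv_nth lessThan_iff)
  define pos where "pos j = (SOME r. r < n \<and> ord ! r = j)" for j
  have pos: "\<And>j. j < n \<Longrightarrow> pos j < n \<and> ord ! pos j = j"
    unfolding pos_def using ex by (metis (mono_tags, lifting) someI_ex)
  have posu: "\<And>r. r < n \<Longrightarrow> pos (ord ! r) = r"
  proof -
    fix r assume r: "r < n"
    have "ord ! r < n" using r len assms(8) by (metis lessThan_iff nth_mem)
    hence "pos (ord ! r) < n" "ord ! pos (ord ! r) = ord ! r" using pos by auto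
    thus "pos (ord ! r) = r" using assms(7) r len by (simp add: nth_eq_iff_index_eq)
  qed
  have LS: "\<And>r. r < n \<Longrightarrow> asg (ord ! r) < m \<and> completes t er (asg (ord ! r)) (ls_load ord asg C r (asg (ord ! r))) (p (ord ! r)) (C (ord ! r))"
    using assms(9) unfolding ls_ect_schedule_def Let_def by auto
  define S where "S j = ls_load ord asg C (pos j) (asg j)" for j
  have feas: "feasible_schedule t er m n p asg S C"
    unfolding feasible_schedule_def
  proof (intro conjI allI impI)
    fix j assume j: "j < n"
    show "asg j < m" using LS[of "pos j"] pos[OF j] by simp
    show "0 \<le> S j" unfolding S_def by (rule ls_load_nonneg)
    show "completes t er (asg j) (S j) (p j) (C j)" using LS[of "pos j"] pos[OF j] unfolding S_def by simp
  next
    fix j j' assume j: "j < n" and j': "j' < n" and ne: "j \<noteq> j' \<and> asg j = asg j'"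
    have pn: "pos j \<noteq> pos j'" using pos[OF j] pos[OF j'] ne by metis
    show "C j \<le> S j' \<or> C j' \<le> S j"
    proof (cases "pos j < pos j'")
      case True
      have "C (ord ! pos j) \<le> ls_load ord asg C (pos j') (asg j')"
        by (rule ls_ge[OF True]) (use pos[OF j] ne in simp)
      thus ?thesis using pos[OF j] unfolding S_def by simp
    next
      case False
      hence lt: "pos j' < pos j" using pn by simp
      have "C (ord ! pos j') \<le> ls_load ord asg C (pos j) (asg j)"
        by (rule ls_ge[OF lt]) (use pos[OF j'] ne in simp)
      thus ?thesis using pos[OF j'] unfolding S_def by simp
    qed
  qed
  hence ne: "Ms \<noteq> {}" unfolding Ms_def by blast
  have bnd: "\<And>M. M \<in> Ms \<Longrightarrow> makespan n C / K \<le> M"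
  proof -
    fix M assume "M \<in> Ms"
    then obtain asg' S' C' where M: "M = makespan n C'" and fs: "feasible_schedule t er m n p asg' S' C'"
      unfolding Ms_def by blast
    have "makespan n C \<le> K * M"
    proof (rule makespan_le)
      show "0 \<le> K * M" using K M makespan_nonneg[of n C'] by simp
      show "\<forall>j<n. C j \<le> K * M"
      proof (intro allI impI)
        fix j assume j: "j < n"
        have "C (ord ! pos j) \<le> K * M"
          unfolding K_def M by (rule job_bound[OF assms(1,2,4,5,6,7,8,9) fs]) (use pos[OF j] in simp)
        thus "C j \<le> K * M" using pos[OF j] by simp
      qed
    qed
    thus "makespan n C / K \<le> M" using K by (simp add: divide_le_eq mult.commute)
  qed
  have "makespan n C / K \<le> Inf Ms" by (rule cInf_greatest[OF ne bnd])
  hence "makespan n C \<le> K * Inf Ms" using K by (simp add: divide_le_eq mult.commute)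
  thus ?thesis unfolding K_def opt_makespan_def Ms_def .
qed

end
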